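(* Let $X$ be a real or complex separable infinite-dimensional F-space and $T:X\to X$ a continuous linear operator. If $T$ is recurrent and cyclic, then the set of cyclic vectors of $T$ is a dense $G_\delta$ subset of $X$. In particular, if $T$ is recurrent and cyclic, then $T$ is quasi-rigid.
   Context: An F-space is a completely metrizable topological vector space. $T$ is recurrent if the set of $x$ with $x\in\overline{\{T^nx:n\geq1\}}$ is dense in $X$. A vector $x$ is cyclic if $\mathrm{span}\{T^nx:n\geq0\}$ is dense in $X$; $T$ is cyclic if it has a cyclic vector. $T$ is quasi-rigid if there exist a strictly increasing sequence $(n_k)$ of positive integers and a dense $Y\subset X$ with $T^{n_k}x\to x$ for every $x\in Y$. *)

theory Defs
  imports "HOL-Analysis.Analysis"
begin

definition F_space ::
  "('k::{field,topological_space} \<Rightarrow> 'a::{ab_group_add,topological_space} \<Rightarrow> 'a) \<Rightarrow> bool" where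
  "F_space s \<longleftrightarrow> vector_space s
     \<and> continuous_on UNIV (\<lambda>p::'a \<times> 'a. fst p + snd p)
     \<and> continuous_on UNIV (\<lambda>p::'k \<times> 'a. s (fst p) (snd p))
     \<and> completely_metrizable_space (euclidean :: 'a topology)"

definition infinite_dimensional ::
  "('k::field \<Rightarrow> 'a::ab_group_add \<Rightarrow> 'a) \<Rightarrow> bool" where
  "infinite_dimensional s \<longleftrightarrow> \<not> (\<exists>B. finite B \<and> module.span s B = UNIV)"

definition recurrent :: "('a::topological_space \<Rightarrow> 'a) \<Rightarrow> bool" where
  "recurrent T \<longleftrightarrow>
     closure {x. x \<in> closure {(T ^^ n) x | n. n \<ge> 1}} = UNIV"

definition cyclic_vector ::
  "('k::field \<Rightarrow> 'a::{ab_group_add,topological_space} \<Rightarrow> 'a) \<Rightarrow> ('a \<Rightarrow> 'a) \<Rightarrow> 'a \<Rightarrow> bool" where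
  "cyclic_vector s T x \<longleftrightarrow> closure (module.span s {(T ^^ n) x | n. n \<ge> 0}) = UNIV"

definition cyclic ::
  "('k::field \<Rightarrow> 'a::{ab_group_add,topological_space} \<Rightarrow> 'a) \<Rightarrow> ('a \<Rightarrow> 'a) \<Rightarrow> bool" where
  "cyclic s T \<longleftrightarrow> (\<exists>x. cyclic_vector s T x)"

definition quasi_rigid :: "('a::topological_space \<Rightarrow> 'a) \<Rightarrow> bool" where
  "quasi_rigid T \<longleftrightarrow> (\<exists>n::nat \<Rightarrow> nat. strict_mono n \<and> (\<forall>k. n k \<ge> 1) \<and>
     (\<exists>Y. closure Y = UNIV \<and> (\<forall>x\<in>Y. (\<lambda>k. (T ^^ n k) x) \<longlonglongrightarrow> x)))"

end

theory Submission
  imports Defs "HOL-Computational_Algebra.Fundamental_Theorem_Algebra"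
begin


locale opctx =
  fixes s :: "'k::real_normed_field \<Rightarrow> 'a::{ab_group_add,topological_space} \<Rightarrow> 'a"
    and T :: "'a \<Rightarrow> 'a"
  assumes vs: "vector_space s"
    and addc: "continuous_on UNIV (\<lambda>p::'a\<times>'a. fst p + snd p)"
    and smc: "continuous_on UNIV (\<lambda>p::'k\<times>'a. s (fst p) (snd p))"
    and lin: "Vector_Spaces.linear s s T"
    and Tc: "continuous_on UNIV T"
begin

sublocale m: module s using vs by (simp add: module_iff_vector_space)
sublocale h: module_hom s s T using lin by (simp add: module_hom_iff_linear)

lemma tendsto_addA:
  fixes f g :: "'b \<Rightarrow> 'a"
  assumes "(f \<longlongrightarrow> a) F" "(g \<longlongrightarrow> b) F"
  shows "((\<lambda>x. f x + g x) \<longlongrightarrow> a + b) F"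
  using continuous_on_tendsto_compose[OF addc tendsto_Pair[OF assms]] by simp

lemma tendsto_scaleA:
  fixes f :: "'b \<Rightarrow> 'k" and g :: "'b \<Rightarrow> 'a"
  assumes "(f \<longlongrightarrow> a) F" "(g \<longlongrightarrow> b) F"
  shows "((\<lambda>x. s (f x) (g x)) \<longlongrightarrow> s a b) F"
  using continuous_on_tendsto_compose[OF smc tendsto_Pair[OF assms]] by simp

lemma tendsto_minusA:
  fixes f :: "'b \<Rightarrow> 'a"
  assumes "(f \<longlongrightarrow> a) F"
  shows "((\<lambda>x. - f x) \<longlongrightarrow> - a) F"
proof -
  have "((\<lambda>x. s (-1) (f x)) \<longlongrightarrow> s (-1) a) F"
    by (rule tendsto_scaleA[OF tendsto_const assms])
  then show ?thesis by simp
qed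

lemma tendsto_diffA:
  fixes f g :: "'b \<Rightarrow> 'a"
  assumes "(f \<longlongrightarrow> a) F" "(g \<longlongrightarrow> b) F"
  shows "((\<lambda>x. f x - g x) \<longlongrightarrow> a - b) F"
  using tendsto_addA[OF assms(1) tendsto_minusA[OF assms(2)]] by simp

lemma tendsto_sumA:
  fixes f :: "'c \<Rightarrow> 'b \<Rightarrow> 'a"
  assumes "\<And>i. i \<in> I \<Longrightarrow> (f i \<longlongrightarrow> a i) F"
  shows "((\<lambda>x. \<Sum>i\<in>I. f i x) \<longlongrightarrow> (\<Sum>i\<in>I. a i)) F"
  using assms
proof (induction I rule: infinite_finite_induct)
  case (insert i I)
  then show ?case by (simp add: tendsto_addA)
qed auto

lemma tendsto_T: fixes f :: "'b \<Rightarrow> 'a" shows "(f \<longlongrightarrow> a) F \<Longrightarrow> ((\<lambda>x. T (f x)) \<longlongrightarrow> T a) F"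
  using continuous_on_tendsto_compose[OF Tc] by simp

lemma tendsto_Tn: fixes f :: "'b \<Rightarrow> 'a" shows "(f \<longlongrightarrow> a) F \<Longrightarrow> ((\<lambda>x. (T^^n) (f x)) \<longlongrightarrow> (T^^n) a) F"
  by (induction n) (auto intro: tendsto_T)

lemma Tn_linear: "(T^^n) (x + y) = (T^^n) x + (T^^n) y" "(T^^n) (s c x) = s c ((T^^n) x)"
  by (induction n) (auto simp: h.add h.scale)

definition polyop :: "'k poly \<Rightarrow> 'a \<Rightarrow> 'a" where
  "polyop p x = (\<Sum>i\<le>degree p. s (coeff p i) ((T^^i) x))"

lemma polyop_bound:
  assumes "degree p \<le> N"
  shows "polyop p x = (\<Sum>i\<le>N. s (coeff p i) ((T^^i) x))"
proof -
  have "(\<Sum>i\<le>N. s (coeff p i) ((T^^i) x)) = (\<Sum>i\<le>degree p. s (coeff p i) ((T^^i) x))"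
    by (rule sum.mono_neutral_right) (auto simp: coeff_eq_0 assms)
  then show ?thesis by (simp add: polyop_def)
qed

lemma polyop_pCons: "polyop (pCons a p) x = s a x + T (polyop p x)"
proof -
  have "polyop (pCons a p) x = (\<Sum>i\<le>Suc (degree p). s (coeff (pCons a p) i) ((T^^i) x))"
    by (rule polyop_bound) (simp add: degree_pCons_le)
  also have "\<dots> = s a x + (\<Sum>i\<le>degree p. s (coeff p i) ((T^^Suc i) x))"
    by (subst sum.atMost_Suc_shift) simp
  also have "(\<Sum>i\<le>degree p. s (coeff p i) ((T^^Suc i) x)) = T (polyop p x)"
    by (simp add: polyop_def h.sum h.scale funpow_swap1)
  finally show ?thesis .
qed

lemma polyop_0[simp]: "polyop 0 x = 0"
  by (simp add: polyop_def)

lemma polyop_const[simp]: "polyop [:c:] x = s c x"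
  by (simp add: polyop_def)

lemma polyop_add: "polyop (p + q) x = polyop p x + polyop q x"
proof -
  let ?N = "max (degree p) (degree q)"
  have "polyop (p + q) x = (\<Sum>i\<le>?N. s (coeff (p+q) i) ((T^^i) x))"
    by (rule polyop_bound) (simp add: degree_add_le)
  also have "\<dots> = (\<Sum>i\<le>?N. s (coeff p i) ((T^^i) x)) + (\<Sum>i\<le>?N. s (coeff q i) ((T^^i) x))"
    by (simp add: m.scale_left_distrib sum.distrib)
  also have "\<dots> = polyop p x + polyop q x"
    by (simp add: polyop_bound[symmetric])
  finally show ?thesis .
qed

lemma polyop_smult: "polyop (smult c p) x = s c (polyop p x)"
proof -
  have "polyop (smult c p) x = (\<Sum>i\<le>degree p. s (coeff (smult c p) i) ((T^^i) x))"
    by (rule polyop_bound) simp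
  then show ?thesis by (simp add: polyop_def m.scale_sum_right)
qed

lemma polyop_lin: "polyop p (x + y) = polyop p x + polyop p y" "polyop p (s c x) = s c (polyop p x)"
   apply (simp add: polyop_def Tn_linear m.scale_right_distrib sum.distrib)
  apply (simp add: polyop_def Tn_linear m.scale_sum_right)
  apply (rule sum.cong, simp_all add: mult.commute)
  done

lemma polyop_T: "polyop p (T x) = T (polyop p x)"
  by (simp add: polyop_def h.sum h.scale funpow_swap1)

lemma polyop_mult: "polyop (p * q) x = polyop p (polyop q x)"
proof (induction p arbitrary: x)
  case 0
  then show ?case by simp
next
  case (pCons a p)
  have "polyop (pCons a p * q) x = polyop (smult a q) x + polyop (pCons 0 (p * q)) x"
    by (simp add: polyop_add)
  also have "\<dots> = s a (polyop q x) + T (polyop p (polyop q x))"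
    by (simp add: polyop_smult polyop_pCons pCons.IH)
  also have "\<dots> = polyop (pCons a p) (polyop q x)"
    by (simp add: polyop_pCons)
  finally show ?case .
qed

lemma polyop_monom: "polyop (monom 1 n) x = (T^^n) x"
proof -
  have "polyop (monom 1 n) x = (\<Sum>i\<le>n. s (coeff (monom 1 n) i) ((T^^i) x))"
    by (rule polyop_bound) (simp add: degree_monom_le)
  also have "\<dots> = (\<Sum>i\<in>{n}. s (coeff (monom 1 n) i) ((T^^i) x))"
    by (rule sum.mono_neutral_right) auto
  finally show ?thesis by simp
qed

lemma tendsto_polyop: fixes f :: "'b \<Rightarrow> 'a" shows "(f \<longlongrightarrow> a) F \<Longrightarrow> ((\<lambda>x. polyop p (f x)) \<longlongrightarrow> polyop p a) F"
  unfolding polyop_def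
  by (intro tendsto_sumA tendsto_scaleA tendsto_const tendsto_Tn)

lemma continuous_on_polyop: "continuous_on A (polyop p)"
  unfolding continuous_on_def by (auto intro: tendsto_polyop tendsto_ident_at)

lemma polyop_one: "polyop 1 x = x"
  by (simp add: polyop_def)

lemma polyop_minus: "polyop (- p) x = - polyop p x"
  using polyop_smult[of "-1" p x] by simp

lemma polyop_diff: "polyop (p - q) x = polyop p x - polyop q x"
  using polyop_add[of p "-q" x] by (simp add: polyop_minus)

lemma polyop_lin2: "polyop [:a, b:] y = s a y + T (s b y)"
  by (simp add: polyop_pCons)

lemma polyop_Tn: "polyop p ((T^^n) x) = (T^^n) (polyop p x)"
  by (induction n) (auto simp: polyop_T)

lemma polyop_comm: "polyop p (polyop q x) = polyop q (polyop p x)"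
proof -
  have "polyop (p*q) x = polyop (q*p) x" by (simp add: mult.commute)
  then show ?thesis by (simp add: polyop_mult)
qed

definition good :: "'k poly \<Rightarrow> bool" where
  "good p \<longleftrightarrow> closure (range (polyop p)) = UNIV"

lemma dense_image:
  assumes "continuous_on UNIV f" "closure A = UNIV" "closure (range f) = UNIV"
  shows "closure (f ` A) = UNIV"
proof -
  have c: "continuous_on (closure A) f"
    using continuous_on_subset[OF assms(1)] by blast
  have "f ` closure A \<subseteq> closure (f ` A)"
    by (rule image_closure_subset[OF c closed_closure closure_subset])
  then have "range f \<subseteq> closure (f ` A)" using assms(2) by simp
  then have "closure (range f) \<subseteq> closure (f ` A)"
    by (simp add: closure_minimal)
  then show ?thesis using assms(3) by auto
qed

lemma good_mult: "good p \<Longrightarrow> good q \<Longrightarrow> good (p * q)"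
  unfolding good_def
proof -
  assume a1: "closure (range (polyop p)) = UNIV" and a2: "closure (range (polyop q)) = UNIV"
  have "closure (polyop p ` range (polyop q)) = UNIV"
    by (rule dense_image[OF continuous_on_polyop a2 a1])
  moreover have "polyop p ` range (polyop q) = range (polyop (p*q))"
    by (auto simp: polyop_mult)
  ultimately show "closure (range (polyop (p * q))) = UNIV" by simp
qed

lemma good_const: "c \<noteq> 0 \<Longrightarrow> good [:c:]"
proof -
  assume c: "c \<noteq> 0"
  have "range (polyop [:c:]) = UNIV"
  proof (intro surjI)
    fix x show "polyop [:c:] (s (inverse c) x) = x" using c by simp
  qed
  then show ?thesis by (simp add: good_def)
qed

lemma in_closure_seq:
  fixes f :: "nat \<Rightarrow> 'a"
  assumes "\<And>n. f n \<in> A" "f \<longlonglongrightarrow> l"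
  shows "l \<in> closure A"
proof -
  have "\<forall>n. f n \<in> closure A" using assms(1) closure_subset by blast
  then show ?thesis
    using Lim_in_closed_set[OF closed_closure always_eventually sequentially_bot assms(2)] by blast
qed

definition RV :: "'a set" where
  "RV = {y. \<exists>r. strict_mono r \<and> (\<lambda>k. (T^^r k) y) \<longlonglongrightarrow> y}"

lemma good_in:
  fixes a b :: "nat \<Rightarrow> 'k"
  assumes dv: "\<And>n. p dvd (monom 1 n - [:a n, b n:])"
    and a: "a \<longlonglongrightarrow> 0" and b: "b \<longlonglongrightarrow> 0" and y: "y \<in> RV"
  shows "y \<in> closure (range (polyop p))"
proof -
  obtain r where r: "strict_mono r" "(\<lambda>k. (T^^r k) y) \<longlonglongrightarrow> y"
    using y by (auto simp: RV_def)
  have mem: "polyop (monom 1 n - [:a n, b n:]) y \<in> range (polyop p)" for n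
  proof -
    obtain h where "monom 1 n - [:a n, b n:] = p * h" using dv[of n] by (auto elim: dvdE)
    then show ?thesis by (simp add: polyop_mult)
  qed
  have eq: "polyop (monom 1 n - [:a n, b n:]) y = (T^^n) y - (s (a n) y + T (s (b n) y))" for n
    by (simp add: polyop_diff polyop_monom polyop_lin2)
  have ar: "(\<lambda>k. a (r k)) \<longlonglongrightarrow> 0" and br: "(\<lambda>k. b (r k)) \<longlonglongrightarrow> 0"
    using LIMSEQ_subseq_LIMSEQ[OF a r(1)] LIMSEQ_subseq_LIMSEQ[OF b r(1)] by (auto simp: o_def)
  have "(\<lambda>k. (T^^r k) y - (s (a (r k)) y + T (s (b (r k)) y))) \<longlonglongrightarrow> y - (s 0 y + T (s 0 y))"
    by (intro tendsto_diffA tendsto_addA tendsto_scaleA tendsto_T r ar br tendsto_const)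
  then have "(\<lambda>k. polyop (monom 1 (r k) - [:a (r k), b (r k):]) y) \<longlonglongrightarrow> y"
    by (simp only: eq m.scale_zero_left h.zero add.right_neutral diff_zero)
  then show ?thesis by (rule in_closure_seq[OF mem])
qed

lemma good_out:
  fixes a b :: "nat \<Rightarrow> 'k"
  assumes dv: "\<And>n. p dvd (1 - [:a n, b n:] * monom 1 n)"
    and a: "a \<longlonglongrightarrow> 0" and b: "b \<longlonglongrightarrow> 0" and y: "y \<in> RV"
  shows "y \<in> closure (range (polyop p))"
proof -
  obtain r where r: "strict_mono r" "(\<lambda>k. (T^^r k) y) \<longlonglongrightarrow> y"
    using y by (auto simp: RV_def)
  have mem: "polyop (1 - [:a n, b n:] * monom 1 n) y \<in> range (polyop p)" for n
  proof -
    obtain h where "1 - [:a n, b n:] * monom 1 n = p * h" using dv[of n] by (auto elim: dvdE)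
    then show ?thesis by (simp add: polyop_mult)
  qed
  have eq: "polyop (1 - [:a n, b n:] * monom 1 n) y = y - (s (a n) ((T^^n) y) + T (s (b n) ((T^^n) y)))" for n
    by (simp only: polyop_diff polyop_mult polyop_one polyop_monom polyop_lin2)
  have ar: "(\<lambda>k. a (r k)) \<longlonglongrightarrow> 0" and br: "(\<lambda>k. b (r k)) \<longlonglongrightarrow> 0"
    using LIMSEQ_subseq_LIMSEQ[OF a r(1)] LIMSEQ_subseq_LIMSEQ[OF b r(1)] by (auto simp: o_def)
  have "(\<lambda>k. y - (s (a (r k)) ((T^^r k) y) + T (s (b (r k)) ((T^^r k) y)))) \<longlonglongrightarrow> y - (s 0 y + T (s 0 y))"
    by (intro tendsto_diffA tendsto_addA tendsto_scaleA tendsto_T r ar br tendsto_const)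
  then have "(\<lambda>k. polyop (1 - [:a (r k), b (r k):] * monom 1 (r k)) y) \<longlonglongrightarrow> y"
    by (simp only: eq m.scale_zero_left h.zero add.right_neutral diff_zero)
  then show ?thesis by (rule in_closure_seq[OF mem])
qed

lemma good_lin:
  assumes RD: "closure RV = UNIV" and l: "norm l \<noteq> 1"
  shows "good [:-l, 1:]"
proof -
  have "RV \<subseteq> closure (range (polyop [:-l, 1:]))"
  proof
    fix y assume y: "y \<in> RV"
    show "y \<in> closure (range (polyop [:-l, 1:]))"
    proof (cases "norm l < 1")
      case True
      show ?thesis
      proof (rule good_in[where a="\<lambda>n. l^n" and b="\<lambda>n. 0", OF _ _ _ y])
        show "[:- l, 1:] dvd monom 1 n - [:l ^ n, 0:]" for n
          by (simp add: poly_eq_0_iff_dvd[symmetric] poly_monom)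
        show "(\<lambda>n. l ^ n) \<longlonglongrightarrow> 0" using True by (rule LIMSEQ_power_zero)
      qed simp
    next
      case False
      then have "norm l > 1" using l by simp
      then have l1: "norm (inverse l) < 1" and l0: "l \<noteq> 0"
        by (auto simp: norm_inverse inverse_less_1_iff)
      show ?thesis
      proof (rule good_out[where a="\<lambda>n. inverse l^n" and b="\<lambda>n. 0", OF _ _ _ y])
        show "[:- l, 1:] dvd 1 - [:inverse l ^ n, 0:] * monom 1 n" for n
          using l0 by (simp add: poly_eq_0_iff_dvd[symmetric] poly_monom power_inverse)
        show "(\<lambda>n. inverse l ^ n) \<longlonglongrightarrow> 0" using l1 by (rule LIMSEQ_power_zero)
      qed simp
    qed
  qed
  then have "closure RV \<subseteq> closure (range (polyop [:-l, 1:]))"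
    by (simp add: closure_minimal)
  then show ?thesis using RD by (auto simp: good_def)
qed

end



definition cev :: "real poly \<Rightarrow> complex \<Rightarrow> complex" where
  "cev p z = poly (map_poly complex_of_real p) z"

lemma map_of_real_add: "map_poly complex_of_real (p + q) = map_poly of_real p + map_poly of_real q"
  by (rule poly_eqI) (simp add: coeff_map_poly)

lemma map_of_real_minus: "map_poly complex_of_real (- p) = - map_poly of_real p"
  by (rule poly_eqI) (simp add: coeff_map_poly)

lemma cev_pCons: "cev (pCons a p) z = of_real a + z * cev p z"
  by (simp add: cev_def map_poly_pCons)

lemma cev_add: "cev (p + q) z = cev p z + cev q z"
  by (simp add: cev_def map_of_real_add)

lemma cev_minus: "cev (- p) z = - cev p z"
  by (simp add: cev_def map_of_real_minus)

lemma cev_diff: "cev (p - q) z = cev p z - cev q z"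
  using cev_add[of p "-q" z] by (simp add: cev_minus)

lemma cev_smult: "cev (smult a p) z = of_real a * cev p z"
  by (simp add: cev_def map_poly_smult)

lemma cev_0[simp]: "cev 0 z = 0"
  by (simp add: cev_def)

lemma cev_mult: "cev (p * q) z = cev p z * cev q z"
proof (induction p)
  case 0 then show ?case by simp
next
  case (pCons a p)
  have "cev (pCons a p * q) z = cev (smult a q) z + cev (pCons 0 (p * q)) z"
    by (simp add: cev_add)
  also have "\<dots> = of_real a * cev q z + z * (cev p z * cev q z)"
    by (simp add: cev_smult cev_pCons pCons.IH)
  also have "\<dots> = cev (pCons a p) z * cev q z"
    by (simp add: cev_pCons algebra_simps)
  finally show ?case .
qed

lemma cev_monom: "cev (monom 1 n) z = z ^ n"
  by (simp add: cev_def map_poly_monom poly_monom)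

lemma cev_one: "cev 1 z = 1"
  by (simp add: cev_def)

lemma cev_of_real: "cev p (of_real x) = of_real (poly p x)"
  by (induction p) (simp_all add: cev_pCons)

lemma cev_pcompose: "cev (pcompose q [:0, r:]) z = cev q (of_real r * z)"
  by (induction q) (simp_all add: pcompose_pCons cev_add cev_mult cev_pCons cev_smult algebra_simps)

lemma degree_map_real: "degree (map_poly complex_of_real p) = degree p"
  by (rule degree_map_poly) simp

lemma map_real_eq_0: "map_poly complex_of_real p = 0 \<longleftrightarrow> p = 0"
  by (rule map_poly_eq_0_iff) auto

lemma cev_lin2: "cev [:a, b:] z = of_real a + z * of_real b"
  by (simp add: cev_pCons)

lemma quad_root: "cev [:(cmod \<mu>)^2, -2 * Re \<mu>, 1:] \<mu> = 0"
proof -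
  have "(cmod \<mu>)^2 = Re \<mu>^2 + Im \<mu>^2" by (rule cmod_power2)
  then show ?thesis by (simp add: cev_pCons complex_eq_iff power2_eq_square algebra_simps)
qed

lemma quad_ne0: "[:(cmod \<mu>)^2, -2 * Re \<mu>, 1:] \<noteq> 0"
  by simp

lemma degree_quad: "degree [:(cmod \<mu>)^2, -2 * Re \<mu>, 1:] = 2"
  by simp

lemma quad_dvd:
  fixes f :: "real poly"
  assumes f: "cev f \<mu> = 0" and im: "Im \<mu> \<noteq> 0"
  shows "[:(cmod \<mu>)^2, -2 * Re \<mu>, 1:] dvd f"
proof -
  define q where "q = [:(cmod \<mu>)^2, -2 * Re \<mu>, 1:]"
  define r where "r = f mod q"
  have q0: "q \<noteq> 0" by (simp add: q_def)
  have "r = 0"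
  proof (rule ccontr)
    assume r0: "r \<noteq> 0"
    then have "degree r < 2" using degree_mod_less[OF q0, of f] by (simp add: r_def q_def)
    then have req: "r = [:coeff r 0, coeff r 1:]"
      by (intro poly_eqI) (auto simp: coeff_pCons coeff_eq_0 split: nat.splits)
    have "f = q * (f div q) + r" by (simp add: r_def)
    then have "cev f \<mu> = cev q \<mu> * cev (f div q) \<mu> + cev r \<mu>"
      by (metis cev_add cev_mult)
    then have "cev r \<mu> = 0" using f quad_root[of \<mu>] by (simp add: q_def)
    then have "of_real (coeff r 0) + \<mu> * of_real (coeff r 1) = 0"
      using req cev_lin2 by metis
    then have "coeff r 0 + Re \<mu> * coeff r 1 = 0" "Im \<mu> * coeff r 1 = 0"
      by (simp_all add: complex_eq_iff)
    then have "coeff r 1 = 0" "coeff r 0 = 0" using im by auto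
    then have "r = 0" using req by simp
    with r0 show False by simp
  qed
  then show ?thesis by (simp add: r_def q_def mod_eq_0_iff_dvd)
qed

locale ropctx = opctx s T for s :: "real \<Rightarrow> 'a::{ab_group_add,topological_space} \<Rightarrow> 'a" and T
begin

lemma good_quad:
  assumes RD: "closure RV = UNIV" and im: "Im \<mu> \<noteq> 0" and nm: "cmod \<mu> \<noteq> 1"
  shows "good [:(cmod \<mu>)^2, -2 * Re \<mu>, 1:]"
proof -
  define q where "q = [:(cmod \<mu>)^2, -2 * Re \<mu>, 1:]"
  define A where "A w = Re w - Im w / Im \<mu> * Re \<mu>" for w
  define B where "B w = Im w / Im \<mu>" for w
  have cevL: "cev [:A w, B w:] \<mu> = w" for w
    using im by (simp add: cev_lin2 A_def B_def complex_eq_iff field_simps)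
  have limAB: "(\<lambda>n. A (w n)) \<longlonglongrightarrow> 0 \<and> (\<lambda>n. B (w n)) \<longlonglongrightarrow> 0" if w: "w \<longlonglongrightarrow> 0" for w :: "nat \<Rightarrow> complex"
  proof -
    have "(\<lambda>n. A (w n)) \<longlonglongrightarrow> Re 0 - Im 0 / Im \<mu> * Re \<mu>"
      using im unfolding A_def by (intro tendsto_intros w)
    moreover have "(\<lambda>n. B (w n)) \<longlonglongrightarrow> Im 0 / Im \<mu>"
      using im unfolding B_def by (intro tendsto_intros w)
    ultimately show ?thesis by simp
  qed
  have "RV \<subseteq> closure (range (polyop q))"
  proof
    fix y assume y: "y \<in> RV"
    show "y \<in> closure (range (polyop q))"
    proof (cases "cmod \<mu> < 1")
      case True
      have w: "(\<lambda>n. \<mu>^n) \<longlonglongrightarrow> 0" using True by (rule LIMSEQ_power_zero)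
      show ?thesis
      proof (rule good_in[where a="\<lambda>n. A (\<mu>^n)" and b="\<lambda>n. B (\<mu>^n)", OF _ _ _ y])
        show "q dvd monom 1 n - [:A (\<mu>^n), B (\<mu>^n):]" for n
          unfolding q_def by (rule quad_dvd[OF _ im]) (simp add: cev_diff cev_monom cevL)
      qed (use limAB[OF w] in auto)
    next
      case False
      then have "cmod \<mu> > 1" using nm by simp
      then have l1: "cmod (inverse \<mu>) < 1" and l0: "\<mu> \<noteq> 0"
        by (auto simp: norm_inverse inverse_less_1_iff)
      have w: "(\<lambda>n. inverse \<mu>^n) \<longlonglongrightarrow> 0" using l1 by (rule LIMSEQ_power_zero)
      show ?thesis
      proof (rule good_out[where a="\<lambda>n. A (inverse \<mu>^n)" and b="\<lambda>n. B (inverse \<mu>^n)", OF _ _ _ y])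
        show "q dvd 1 - [:A (inverse \<mu>^n), B (inverse \<mu>^n):] * monom 1 n" for n
          unfolding q_def by (rule quad_dvd[OF _ im])
            (simp add: cev_diff cev_mult cev_monom cevL cev_one l0 power_inverse del: mult_pCons_left)
      qed (use limAB[OF w] in auto)
    qed
  qed
  then have "closure RV \<subseteq> closure (range (polyop q))"
    by (simp add: closure_minimal)
  then show ?thesis using RD by (auto simp: good_def q_def)
qed

lemma good_real:
  assumes RD: "closure RV = UNIV"
  shows "p \<noteq> 0 \<Longrightarrow> (\<forall>z. cmod z = 1 \<longrightarrow> cev p z \<noteq> 0) \<Longrightarrow> good p"
proof (induction "degree p" arbitrary: p rule: less_induct)
  case less
  show ?case
  proof (cases "degree p = 0")
    case True
    then obtain c where c: "p = [:c:]" by (rule degree_eq_zeroE)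
    then show ?thesis using less.prems good_const by auto
  next
    case False
    have "\<not> (\<exists>a l. a \<noteq> 0 \<and> l = 0 \<and> map_poly complex_of_real p = pCons a l)"
    proof
      assume "\<exists>a l. a \<noteq> 0 \<and> l = 0 \<and> map_poly complex_of_real p = pCons a l"
      then have "degree (map_poly complex_of_real p) = 0" by auto
      with False show False by (simp add: degree_map_real)
    qed
    from fundamental_theorem_of_algebra_alt[OF this]
    obtain \<mu> where \<mu>: "cev p \<mu> = 0" by (auto simp: cev_def)
    have nm: "cmod \<mu> \<noteq> 1" using less.prems \<mu> by auto
    have step: "good p" if dp: "p = d * g" and gd: "good d" and dd: "degree d > 0" for d g
    proof -
      have g0: "g \<noteq> 0" "d \<noteq> 0" using dp less.prems by auto
      have "degree p = degree d + degree g" using dp g0 by (simp add: degree_mult_eq)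
      then have "degree g < degree p" using dd by simp
      moreover have "\<forall>z. cmod z = 1 \<longrightarrow> cev g z \<noteq> 0"
        using less.prems dp by (auto simp: cev_mult)
      ultimately have "good g" using less.hyps g0 by blast
      then show ?thesis using gd dp good_mult by simp
    qed
    show ?thesis
    proof (cases "Im \<mu> = 0")
      case True
      then have meq: "\<mu> = of_real (Re \<mu>)" by (simp add: complex_eq_iff)
      have "poly p (Re \<mu>) = 0" using \<mu> meq cev_of_real[of p "Re \<mu>"] by simp
      then obtain g where g: "p = [:- Re \<mu>, 1:] * g" by (auto simp: poly_eq_0_iff_dvd elim: dvdE)
      have "norm (Re \<mu>) \<noteq> 1" using nm meq by (metis norm_of_real real_norm_def)
      then have "good [:- Re \<mu>, 1:]" by (rule good_lin[OF RD])
      then show ?thesis using step[OF g] by simp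
    next
      case False
      obtain g where g: "p = [:(cmod \<mu>)^2, -2 * Re \<mu>, 1:] * g"
        using quad_dvd[OF \<mu> False] by (auto elim: dvdE)
      show ?thesis by (rule step[OF g good_quad[OF RD False nm]]) simp
    qed
  qed
qed

lemma good_real_perturb:
  assumes RD: "closure RV = UNIV" and q: "q \<noteq> 0"
  shows "\<exists>F. finite F \<and> (\<forall>r>0. r \<notin> F \<longrightarrow> good (pcompose q [:0, of_real r:]))"
proof (intro exI conjI allI impI)
  let ?F = "cmod ` {z. cev q z = 0}"
  show "finite ?F"
    using poly_roots_finite[of "map_poly complex_of_real q"] q
    by (simp add: cev_def map_real_eq_0)
  fix r :: real assume r: "r > 0" "r \<notin> ?F"
  show "good (pcompose q [:0, of_real r:])"
  proof (rule good_real[OF RD])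
    show "pcompose q [:0, of_real r:] \<noteq> 0"
      using q r by (simp add: pcompose_eq_0_iff)
    show "\<forall>z. cmod z = 1 \<longrightarrow> cev (pcompose q [:0, of_real r:]) z \<noteq> 0"
    proof (intro allI impI notI)
      fix z assume z: "cmod z = 1" "cev (pcompose q [:0, of_real r:]) z = 0"
      then have "cev q (of_real r * z) = 0" by (simp add: cev_pcompose)
      moreover have "cmod (of_real r * z) = r" using z r by (simp add: norm_mult)
      ultimately show False using r by force
    qed
  qed
qed

end

locale copctx = opctx s T for s :: "complex \<Rightarrow> 'a::{ab_group_add,topological_space} \<Rightarrow> 'a" and T
begin

lemma good_complex:
  assumes RD: "closure RV = UNIV"
  shows "p \<noteq> 0 \<Longrightarrow> (\<forall>z. cmod z = 1 \<longrightarrow> poly p z \<noteq> 0) \<Longrightarrow> good p"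
proof (induction "degree p" arbitrary: p rule: less_induct)
  case less
  show ?case
  proof (cases "degree p = 0")
    case True
    then obtain c where c: "p = [:c:]" by (rule degree_eq_zeroE)
    then show ?thesis using less.prems good_const by auto
  next
    case False
    have "\<not> (\<exists>a l. a \<noteq> 0 \<and> l = 0 \<and> p = pCons a l)"
      using False by auto
    from fundamental_theorem_of_algebra_alt[OF this]
    obtain \<mu> where \<mu>: "poly p \<mu> = 0" by auto
    have nm: "cmod \<mu> \<noteq> 1" using less.prems \<mu> by auto
    obtain g where g: "p = [:- \<mu>, 1:] * g" using \<mu> by (auto simp: poly_eq_0_iff_dvd elim: dvdE)
    have gd: "good [:- \<mu>, 1:]" using nm by (intro good_lin[OF RD]) simp
    have g0: "g \<noteq> 0" using g less.prems by auto
    have "degree p = 1 + degree g" using g g0 by (simp add: degree_mult_eq del: mult_pCons_left)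
    then have "degree g < degree p" by simp
    moreover have "\<forall>z. cmod z = 1 \<longrightarrow> poly g z \<noteq> 0"
      using less.prems g by auto
    ultimately have "good g" using less.hyps g0 by blast
    then have "good ([:- \<mu>, 1:] * g)" using gd good_mult by blast
    then show ?thesis unfolding g .
  qed
qed

lemma good_complex_perturb:
  assumes RD: "closure RV = UNIV" and q: "q \<noteq> 0"
  shows "\<exists>F. finite F \<and> (\<forall>r>0. r \<notin> F \<longrightarrow> good (pcompose q [:0, of_real r:]))"
proof (intro exI conjI allI impI)
  let ?F = "cmod ` {z. poly q z = 0}"
  show "finite ?F"
    using poly_roots_finite[of q] q by simp
  fix r :: real assume r: "r > 0" "r \<notin> ?F"
  show "good (pcompose q [:0, of_real r:])"
  proof (rule good_complex[OF RD])
    show "pcompose q [:0, of_real r:] \<noteq> 0"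
      using q r by (simp add: pcompose_eq_0_iff)
    show "\<forall>z. cmod z = 1 \<longrightarrow> poly (pcompose q [:0, of_real r:]) z \<noteq> 0"
    proof (intro allI impI notI)
      fix z assume z: "cmod z = 1" "poly (pcompose q [:0, of_real r:]) z = 0"
      then have "poly q (of_real r * z) = 0" by (simp add: poly_pcompose mult.commute)
      moreover have "cmod (of_real r * z) = r" using z r by (simp add: norm_mult)
      ultimately show False using r by force
    qed
  qed
qed

end



lemma dense_meets:
  assumes "closure A = UNIV" "open U" "U \<noteq> {}"
  shows "\<exists>a\<in>A. a \<in> U"
  using open_Int_closure_eq_empty[OF assms(2), of A] assms by auto

lemma meets_dense:
  assumes "\<And>U. open U \<Longrightarrow> U \<noteq> {} \<Longrightarrow> U \<inter> A \<noteq> {}"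
  shows "closure A = UNIV"
proof (rule ccontr)
  assume "closure A \<noteq> UNIV"
  then have "- closure A \<noteq> {}" by auto
  moreover have "open (- closure A)" by auto
  ultimately have "- closure A \<inter> A \<noteq> {}" using assms by blast
  then show False using closure_subset by auto
qed

context opctx
begin

lemma span_orbit: "m.span {(T^^n) x | n. n \<ge> 0} = range (\<lambda>p. polyop p x)"
proof
  show "m.span {(T^^n) x | n. n \<ge> 0} \<subseteq> range (\<lambda>p. polyop p x)"
  proof (rule m.span_minimal)
    show "{(T^^n) x | n. n \<ge> 0} \<subseteq> range (\<lambda>p. polyop p x)"
      by (auto simp: polyop_monom[symmetric])
    show "m.subspace (range (\<lambda>p. polyop p x))"
      unfolding m.subspace_def
    proof (intro conjI ballI allI)
      show "0 \<in> range (\<lambda>p. polyop p x)" by (auto intro: range_eqI[of _ _ 0])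
      fix u v assume "u \<in> range (\<lambda>p. polyop p x)" "v \<in> range (\<lambda>p. polyop p x)"
      then obtain p q where "u = polyop p x" "v = polyop q x" by auto
      then show "u + v \<in> range (\<lambda>p. polyop p x)"
        by (auto intro: range_eqI[of _ _ "p + q"] simp: polyop_add)
    next
      fix c u assume "u \<in> range (\<lambda>p. polyop p x)"
      then obtain p where "u = polyop p x" by auto
      then show "s c u \<in> range (\<lambda>p. polyop p x)"
        by (auto intro: range_eqI[of _ _ "smult c p"] simp: polyop_smult)
    qed
  qed
next
  show "range (\<lambda>p. polyop p x) \<subseteq> m.span {(T^^n) x | n. n \<ge> 0}"
  proof
    fix u assume "u \<in> range (\<lambda>p. polyop p x)"
    then obtain p where u: "u = polyop p x" by auto
    show "u \<in> m.span {(T^^n) x | n. n \<ge> 0}"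
      unfolding u polyop_def
      by (intro m.span_sum m.span_scale m.span_base) auto
  qed
qed

lemma cyclic_iff: "cyclic_vector s T x \<longleftrightarrow> closure (range (\<lambda>p. polyop p x)) = UNIV"
  by (simp only: cyclic_vector_def span_orbit)

lemma cyc_good:
  assumes x0: "closure (range (\<lambda>p. polyop p x0)) = UNIV" and g: "good q"
  shows "closure (range (\<lambda>p. polyop p (polyop q x0))) = UNIV"
proof -
  have "(\<lambda>p. polyop p (polyop q x0)) = (\<lambda>p. polyop q (polyop p x0))"
    by (rule ext) (rule polyop_comm)
  moreover have "polyop q ` range (\<lambda>p. polyop p x0) = range (\<lambda>p. polyop q (polyop p x0))"
    by (rule image_image)
  ultimately have "range (\<lambda>p. polyop p (polyop q x0)) = polyop q ` range (\<lambda>p. polyop p x0)"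
    by (simp only:)
  moreover have "closure (polyop q ` range (\<lambda>p. polyop p x0)) = UNIV"
    by (rule dense_image[OF continuous_on_polyop x0]) (use g in \<open>simp add: good_def\<close>)
  ultimately show ?thesis by simp
qed

lemma polyop_scaled:
  "polyop (pcompose q [:0, c:]) x = (\<Sum>i\<le>degree q. s (c^i * coeff q i) ((T^^i) x))"
proof -
  have "degree (pcompose q [:0, c:]) \<le> degree q * degree [:0, c:]" by (rule degree_pcompose_le)
  also have "\<dots> \<le> degree q" by simp
  finally show ?thesis by (simp add: polyop_bound coeff_pcompose_linear)
qed

lemma dense_cyclic:
  assumes pert: "\<And>q. q \<noteq> 0 \<Longrightarrow> \<exists>F. finite F \<and> (\<forall>r>0. r \<notin> F \<longrightarrow> good (pcompose q [:0, of_real r:]))"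
    and x0: "closure (range (\<lambda>p. polyop p x0)) = UNIV"
  shows "closure {x. closure (range (\<lambda>p. polyop p x)) = UNIV} = UNIV"
proof (rule meets_dense)
  fix U :: "'a set" assume U: "open U" "U \<noteq> {}"
  obtain p0 where p0: "polyop p0 x0 \<in> U" using dense_meets[OF x0 U] by auto
  have goodpt: "U \<inter> {x. closure (range (\<lambda>p. polyop p x)) = UNIV} \<noteq> {}"
    if "good q" "polyop q x0 \<in> U" for q
    using cyc_good[OF x0 that(1)] that(2) by blast
  show "U \<inter> {x. closure (range (\<lambda>p. polyop p x)) = UNIV} \<noteq> {}"
  proof (cases "p0 = 0")
    case True
    then have "0 \<in> U" using p0 by simp
    define c where "c m = (of_real (1 / real (Suc m)) :: 'k)" for m
    have "(\<lambda>m. 1 / real (Suc m)) \<longlonglongrightarrow> 0" by (rule LIMSEQ_Suc[OF lim_inverse_n'])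
    then have "c \<longlonglongrightarrow> of_real 0" unfolding c_def by (intro tendsto_of_real)
    then have "(\<lambda>m. s (c m) x0) \<longlonglongrightarrow> s 0 x0"
      by (intro tendsto_scaleA tendsto_const) simp
    then have "eventually (\<lambda>m. s (c m) x0 \<in> U) sequentially"
      using \<open>0 \<in> U\<close> U(1) by (intro topological_tendstoD) auto
    then obtain m where m: "s (c m) x0 \<in> U" using eventually_happens' sequentially_bot by blast
    have "(1 / real (Suc m)) \<noteq> 0" by simp
    then have "c m \<noteq> 0" unfolding c_def by (simp only: of_real_eq_0_iff not_False_eq_True)
    then have "good [:c m:]" by (rule good_const)
    then show ?thesis using goodpt m by auto
  next
    case False
    obtain F where F: "finite F" "\<And>r. r > 0 \<Longrightarrow> r \<notin> F \<Longrightarrow> good (pcompose p0 [:0, of_real r:])"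
      using pert[OF False] by blast
    define r where "r m = 1 + 1 / real (Suc m)" for m
    have rpos: "r m > 0" for m by (simp add: r_def add_pos_pos)
    have "(\<lambda>m. 1 / real (Suc m)) \<longlonglongrightarrow> 0" by (rule LIMSEQ_Suc[OF lim_inverse_n'])
    then have "(\<lambda>m. of_real (r m) :: 'k) \<longlonglongrightarrow> of_real (1 + 0)"
      unfolding r_def by (intro tendsto_of_real tendsto_add tendsto_const)
    then have rl: "(\<lambda>m. of_real (r m) :: 'k) \<longlonglongrightarrow> 1" by simp
    have "(\<lambda>m. \<Sum>i\<le>degree p0. s ((of_real (r m))^i * coeff p0 i) ((T^^i) x0))
            \<longlonglongrightarrow> (\<Sum>i\<le>degree p0. s (1^i * coeff p0 i) ((T^^i) x0))"
      by (intro tendsto_sumA tendsto_scaleA tendsto_mult tendsto_power rl tendsto_const)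
    then have "(\<lambda>m. polyop (pcompose p0 [:0, of_real (r m):]) x0) \<longlonglongrightarrow> polyop p0 x0"
      unfolding polyop_scaled by (simp add: polyop_def)
    then have ev1: "eventually (\<lambda>m. polyop (pcompose p0 [:0, of_real (r m):]) x0 \<in> U) sequentially"
      using p0 U(1) by (intro topological_tendstoD) auto
    have "inj r" by (rule injI) (simp add: r_def)
    then have "finite (r -` F)" using F(1) by (simp add: finite_vimageI)
    then have ev2: "eventually (\<lambda>m. r m \<notin> F) sequentially"
      by (simp add: cofinite_eq_sequentially[symmetric] eventually_cofinite vimage_def)
    obtain m where m: "polyop (pcompose p0 [:0, of_real (r m):]) x0 \<in> U" "r m \<notin> F"
      using eventually_happens'[OF sequentially_bot eventually_conj[OF ev1 ev2]] by blast
    show ?thesis using goodpt[OF F(2)[OF rpos m(2)] m(1)] .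
  qed
qed

end



lemma subseq_from:
  fixes P :: "nat \<Rightarrow> nat \<Rightarrow> bool"
  assumes "\<And>N k. \<exists>n\<ge>N. P n k"
  shows "\<exists>r. strict_mono r \<and> (\<forall>k. P (r k) k)"
proof -
  define g where "g N k = (SOME n. n \<ge> N \<and> P n k)" for N k
  have g: "g N k \<ge> N \<and> P (g N k) k" for N k
  proof -
    have "\<exists>n. n \<ge> N \<and> P n k" using assms[of N k] by blast
    then show ?thesis unfolding g_def by (rule someI_ex)
  qed
  define r where "r = rec_nat (g 0 0) (\<lambda>k rk. g (Suc rk) (Suc k))"
  have r0: "r 0 = g 0 0" and rS: "r (Suc k) = g (Suc (r k)) (Suc k)" for k
    by (simp_all add: r_def)
  have "strict_mono r"
  proof (rule strict_monoI_Suc)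
    fix k show "r k < r (Suc k)" using g[of "Suc (r k)" "Suc k"] rS[of k] by simp
  qed
  moreover have "P (r k) k" for k
  proof (cases k)
    case 0 then show ?thesis using g[of 0 0] r0 by simp
  next
    case (Suc j) then show ?thesis using g[of "Suc (r j)" "Suc j"] rS[of j] by simp
  qed
  ultimately show ?thesis by blast
qed

locale mctx = opctx s T
  for s :: "'k::real_normed_field \<Rightarrow> 'a::{ab_group_add,topological_space} \<Rightarrow> 'a" and T +
  fixes d :: "'a \<Rightarrow> 'a \<Rightarrow> real"
  assumes ms: "Metric_space UNIV d"
    and topeq: "(euclidean :: 'a topology) = Metric_space.mtopology UNIV d"
begin

sublocale md: Metric_space UNIV d by (rule ms)

lemma open_metric: "open U \<longleftrightarrow> (\<forall>x\<in>U. \<exists>e>0. md.mball x e \<subseteq> U)"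
  by (simp add: open_openin topeq md.openin_mtopology Ball_def)

lemma open_mball: "open (md.mball x e)"
  by (simp add: open_openin topeq)

lemma closure_metric: "x \<in> closure A \<longleftrightarrow> (\<forall>e>0. \<exists>a\<in>A. d x a < e)"
proof -
  have "closure A = md.mtopology closure_of A" by (metis euclidean_closure_of topeq)
  then show ?thesis by (auto simp: md.metric_closure_of)
qed

lemma tendsto_metric: "(f \<longlongrightarrow> l) sequentially \<longleftrightarrow> (\<forall>e>0. \<exists>N. \<forall>n\<ge>N. d (f n) l < e)"
proof -
  have "(f \<longlongrightarrow> l) sequentially \<longleftrightarrow> limitin md.mtopology f l sequentially"
    by (metis limitin_canonical_iff topeq)
  then show ?thesis by (simp add: md.limit_metric_sequentially)
qed

lemma open_dlt:
  assumes g: "continuous_on UNIV g"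
  shows "open {x. d (g x) x < e}"
  unfolding open_metric
proof
  fix x assume "x \<in> {x. d (g x) x < e}"
  then have x: "d (g x) x < e" by simp
  define \<delta>0 where "\<delta>0 = e - d (g x) x"
  have d0: "\<delta>0 > 0" using x by (simp add: \<delta>0_def)
  have "open (g -` md.mball (g x) (\<delta>0/2))"
    using continuous_on_open_vimage[OF open_UNIV, of g] g open_mball by auto
  moreover have "x \<in> g -` md.mball (g x) (\<delta>0/2)" using d0 by simp
  ultimately obtain \<delta>1 where \<delta>1: "\<delta>1 > 0" "md.mball x \<delta>1 \<subseteq> g -` md.mball (g x) (\<delta>0/2)"
    unfolding open_metric by blast
  show "\<exists>\<delta>>0. md.mball x \<delta> \<subseteq> {x. d (g x) x < e}"
  proof (intro exI conjI)
    show "min \<delta>1 (\<delta>0/2) > 0" using \<delta>1 d0 by simp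
    show "md.mball x (min \<delta>1 (\<delta>0/2)) \<subseteq> {x. d (g x) x < e}"
    proof
      fix y assume y: "y \<in> md.mball x (min \<delta>1 (\<delta>0/2))"
      then have y1: "d x y < \<delta>0/2" by simp
      have "y \<in> md.mball x \<delta>1" using y by simp
      then have y2: "d (g x) (g y) < \<delta>0/2" using \<delta>1 by auto
      have "d (g y) y \<le> d (g y) (g x) + d (g x) y" by (rule md.triangle) auto
      also have "d (g x) y \<le> d (g x) x + d x y" by (rule md.triangle) auto
      finally have "d (g y) y \<le> d (g x) (g y) + d (g x) x + d x y" by (simp add: md.commute)
      then show "y \<in> {x. d (g x) x < e}" using y1 y2 by (simp add: \<delta>0_def)
    qed
  qed
qed

lemma rec_strong:
  assumes x: "x \<in> closure {(T^^n) x | n. n \<ge> 1}" and that: "e > 0"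
  shows "\<exists>n\<ge>N. d ((T^^n) x) x < e"
proof -
  have base: "\<exists>n\<ge>1. d ((T^^n) x) x < e" if "e > 0" for e
  proof -
    define A where "A = {(T^^n) x | n. n \<ge> 1}"
    have "x \<in> closure A" using x by (simp add: A_def)
    then have "\<exists>a\<in>A. d x a < e" using that unfolding closure_metric by blast
    then obtain a where a: "a \<in> A" "d x a < e" by blast
    then obtain n where n: "n \<ge> 1" "a = (T^^n) x" unfolding A_def by blast
    have "d ((T^^n) x) x = d x ((T^^n) x)" by (rule md.commute)
    then have "d ((T^^n) x) x < e" using a(2) n(2) by simp
    then show ?thesis using n(1) by blast
  qed
  have "\<forall>e>0. \<exists>n. n \<ge> N \<and> n \<ge> 1 \<and> d ((T^^n) x) x < e"
  proof (induction N)
    case 0 then show ?case using base by auto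
  next
    case (Suc N)
    show ?case
    proof (intro allI impI)
      fix e :: real assume e: "e > 0"
      show "\<exists>n. n \<ge> Suc N \<and> n \<ge> 1 \<and> d ((T^^n) x) x < e"
      proof (cases "N = 0")
        case True then show ?thesis using base[OF e] by auto
      next
        case N0: False
        show ?thesis
        proof (cases "(T^^N) x = x")
          case True
          have "(T^^(N + N)) x = x" using True by (simp add: funpow_add)
          then show ?thesis using N0 e by (intro exI[of _ "N + N"]) auto
        next
          case False
          have "d ((T^^N) x) x \<noteq> 0" using False md.zero[of "(T^^N) x" x] by blast
          then have pos: "d ((T^^N) x) x > 0" using md.nonneg[of "(T^^N) x" x] by linarith
          have "min e (d ((T^^N) x) x) > 0" using pos e by simp
          then obtain n where n: "n \<ge> N" "n \<ge> 1" "d ((T^^n) x) x < min e (d ((T^^N) x) x)"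
            using Suc.IH by blast
          then have "n \<noteq> N" by auto
          then show ?thesis using n by (intro exI[of _ n]) auto
        qed
      qed
    qed
  qed
  then show ?thesis using that by blast
qed

lemma rec_RV:
  assumes x: "x \<in> closure {(T^^n) x | n. n \<ge> 1}"
  shows "x \<in> RV"
proof -
  have "\<exists>n\<ge>N. d ((T^^n) x) x < 1 / real (Suc k)" for N k
    by (rule rec_strong[OF x]) simp
  then obtain r where r: "strict_mono r" "\<And>k. d ((T^^r k) x) x < 1 / real (Suc k)"
    using subseq_from[where P="\<lambda>n k. d ((T^^n) x) x < 1 / real (Suc k)"] by blast
  have "(\<lambda>k. (T^^r k) x) \<longlonglongrightarrow> x"
    unfolding tendsto_metric
  proof (intro allI impI)
    fix e :: real assume e: "e > 0"
    obtain K where K: "1 / real (Suc K) < e" using e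
      by (rule nat_approx_posE)
    show "\<exists>N. \<forall>n\<ge>N. d ((T^^r n) x) x < e"
    proof (intro exI allI impI)
      fix n assume "n \<ge> K"
      then have "1 / real (Suc n) \<le> 1 / real (Suc K)" by (intro divide_left_mono) auto
      then show "d ((T^^r n) x) x < e" using r(2)[of n] K by linarith
    qed
  qed
  then show ?thesis using r(1) by (auto simp: RV_def)
qed

lemma RD:
  assumes "recurrent T"
  shows "closure RV = UNIV"
proof -
  have "{x. x \<in> closure {(T^^n) x | n. n \<ge> 1}} \<subseteq> RV" using rec_RV by blast
  then have "closure {x. x \<in> closure {(T^^n) x | n. n \<ge> 1}} \<subseteq> closure RV" by (rule closure_mono)
  then show ?thesis using assms by (auto simp: recurrent_def)
qed

end



context mctx
begin

lemma Tn_cont: "continuous_on UNIV (T^^n)"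
  unfolding continuous_on_def
proof (intro ballI)
  fix x :: 'a
  have "((\<lambda>y. (T^^n) y) \<longlongrightarrow> (T^^n) x) (at x within UNIV)"
    by (rule tendsto_Tn[OF tendsto_ident_at])
  then show "((T^^n) \<longlongrightarrow> (T^^n) x) (at x within UNIV)" by simp
qed

lemma main_mctx:
  assumes cm: "completely_metrizable_space (euclidean :: 'a topology)"
    and sep: "separable_space (euclidean :: 'a topology)"
    and rec: "recurrent T" and cyc: "cyclic s T"
    and pert: "\<And>q. q \<noteq> 0 \<Longrightarrow> \<exists>F. finite F \<and> (\<forall>r>0. r \<notin> F \<longrightarrow> good (pcompose q [:0, of_real r:]))"
  shows "gdelta_in euclidean {x. cyclic_vector s T x} \<and> closure {x. cyclic_vector s T x} = UNIV \<and> quasi_rigid T"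
proof -
  obtain x0 where x0: "cyclic_vector s T x0" using cyc by (auto simp: cyclic_def)
  have x0': "closure (range (\<lambda>p. polyop p x0)) = UNIV" using x0 by (simp add: cyclic_iff)
  define Cyc where "Cyc = {x. cyclic_vector s T x}"
  have Cyc_eq: "Cyc = {x. closure (range (\<lambda>p. polyop p x)) = UNIV}"
    by (simp add: Cyc_def cyclic_iff)
  have dense_Cyc: "closure Cyc = UNIV" unfolding Cyc_eq by (rule dense_cyclic[OF pert x0'])
  have "\<exists>C::'a set. countable C \<and> C \<subseteq> topspace euclidean \<and> euclidean closure_of C = topspace euclidean"
    using sep by (simp only: separable_space_def)
  then obtain D :: "'a set" where D0: "countable D" "euclidean closure_of D = topspace euclidean"
    by blast
  have D: "countable D" "closure D = UNIV" using D0 by simp_all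
  define W where "W c k = {x. \<exists>p. d c (polyop p x) < 1 / real (Suc k)}" for c k
  have W_open: "open (W c k)" for c k
  proof -
    have eq: "W c k = (\<Union>p. polyop p -` md.mball c (1 / real (Suc k)))" by (auto simp: W_def)
    have "open (polyop p -` md.mball c (1 / real (Suc k)))" for p
    proof -
      have "\<forall>B. open B \<longrightarrow> open (polyop p -` B \<inter> UNIV)"
        using continuous_on_open_vimage[OF open_UNIV, of "polyop p"] continuous_on_polyop by blast
      then show ?thesis using open_mball by simp
    qed
    then show ?thesis unfolding eq by (intro open_UN) simp
  qed
  have Cyc_char: "x \<in> Cyc \<longleftrightarrow> (\<forall>c\<in>D. \<forall>k. x \<in> W c k)" for x
  proof
    assume "x \<in> Cyc"
    then have cx: "closure (range (\<lambda>p. polyop p x)) = UNIV" by (simp add: Cyc_eq)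
    show "\<forall>c\<in>D. \<forall>k. x \<in> W c k"
    proof (intro ballI allI)
      fix c k
      have "c \<in> closure (range (\<lambda>p. polyop p x))" using cx by simp
      moreover have "(1 / real (Suc k)) > 0" by simp
      ultimately have "\<exists>a\<in>range (\<lambda>p. polyop p x). d c a < 1 / real (Suc k)"
        unfolding closure_metric by blast
      then show "x \<in> W c k" by (auto simp: W_def)
    qed
  next
    assume H: "\<forall>c\<in>D. \<forall>k. x \<in> W c k"
    have "y \<in> closure (range (\<lambda>p. polyop p x))" for y
      unfolding closure_metric
    proof (intro allI impI)
      fix e :: real assume e: "e > 0"
      then have e2: "e / 2 > 0" by simp
      have "y \<in> closure D" using D(2) by simp
      then obtain c where c: "c \<in> D" "d y c < e/2" using e2 unfolding closure_metric by blast
      obtain k where k: "1 / real (Suc k) < e/2" using e2 by (rule nat_approx_posE)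
      have "x \<in> W c k" using H c(1) by blast
      then obtain p where p: "d c (polyop p x) < 1 / real (Suc k)" by (auto simp: W_def)
      have "d y (polyop p x) \<le> d y c + d c (polyop p x)" by (rule md.triangle) auto
      then have "d y (polyop p x) < e" using c k p by linarith
      then show "\<exists>a\<in>range (\<lambda>p. polyop p x). d y a < e" by blast
    qed
    then show "x \<in> Cyc" by (auto simp: Cyc_eq)
  qed
  define U where "U = (\<lambda>(c,k). W c k) ` (D \<times> (UNIV :: nat set))"
  have U_count: "countable U" using D(1) by (simp add: U_def)
  have Um: "x \<in> \<Inter>U \<longleftrightarrow> (\<forall>c\<in>D. \<forall>k. x \<in> W c k)" for x
    by (auto simp: U_def)
  have U_inter: "\<Inter>U = Cyc" by (rule set_eqI) (simp only: Um Cyc_char)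
  have U_open: "\<forall>V\<in>U. open V" using W_open by (auto simp: U_def)
  have gd: "gdelta_in euclidean Cyc"
    unfolding gdelta_in_alt intersection_of_def
  proof (intro conjI exI[of _ U])
    show "Cyc \<subseteq> topspace euclidean" by simp
    show "countable U" by (rule U_count)
    show "U \<subseteq> Collect (openin euclidean)" using U_open by auto
    show "\<Inter>U = Cyc" by (rule U_inter)
  qed
  define G where "G N k = {x. \<exists>n\<ge>N. d ((T^^n) x) x < 1 / real (Suc k)}" for N k
  have G_open: "open (G N k)" for N k
  proof -
    have "G N k = (\<Union>n\<in>{N..}. {x. d ((T^^n) x) x < 1 / real (Suc k)})" by (auto simp: G_def)
    moreover have "open {x. d ((T^^n) x) x < 1 / real (Suc k)}" for n
      by (rule open_dlt[OF Tn_cont])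
    ultimately show ?thesis by (simp add: open_UN)
  qed
  define R0 where "R0 = {x. x \<in> closure {(T^^n) x | n. n \<ge> 1}}"
  have R0d: "closure R0 = UNIV" using rec by (simp add: recurrent_def R0_def)
  have R0G: "R0 \<subseteq> G N k" for N k
  proof
    fix x assume "x \<in> R0"
    then have "x \<in> closure {(T^^n) x | n. n \<ge> 1}" by (simp add: R0_def)
    then have "\<exists>n\<ge>N. d ((T^^n) x) x < 1 / real (Suc k)" by (rule rec_strong) simp
    then show "x \<in> G N k" by (simp add: G_def)
  qed
  define \<G> where "\<G> = U \<union> range (\<lambda>(N,k). G N k)"
  have "euclidean closure_of \<Inter>\<G> = topspace euclidean"
  proof (rule Baire_category)
    show "completely_metrizable_space (euclidean::'a topology) \<or> locally_compact_space (euclidean::'a topology) \<and> regular_space (euclidean::'a topology)"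
      using cm by simp
    show "countable \<G>" using U_count by (simp add: \<G>_def)
    fix V assume V: "V \<in> \<G>"
    show "openin euclidean V \<and> euclidean closure_of V = topspace euclidean"
    proof (cases "V \<in> U")
      case True
      have "open V" using U_open True by blast
      moreover have "Cyc \<subseteq> V" using True U_inter by blast
      then have "closure Cyc \<subseteq> closure V" by (rule closure_mono)
      then have "closure V = UNIV" using dense_Cyc by auto
      ultimately show ?thesis by simp
    next
      case False
      then obtain N k where Vd: "V = G N k" using V by (auto simp: \<G>_def)
      have "open V" using G_open Vd by simp
      moreover have "closure R0 \<subseteq> closure V" using R0G Vd by (simp add: closure_mono)
      then have "closure V = UNIV" using R0d by auto
      ultimately show ?thesis by simp
    qed
  qed
  then have "closure (\<Inter>\<G>) = UNIV" by simp
  have "\<Inter>\<G> \<noteq> {}"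
  proof
    assume "\<Inter>\<G> = {}"
    then have "closure (\<Inter>\<G>) = {}" by simp
    with \<open>closure (\<Inter>\<G>) = UNIV\<close> show False by simp
  qed
  then obtain x where x: "x \<in> \<Inter>\<G>" by blast
  have "\<Inter>\<G> \<subseteq> \<Inter>U" by (rule Inter_anti_mono) (simp add: \<G>_def)
  then have xC: "x \<in> Cyc" using x U_inter by blast
  then have xc: "closure (range (\<lambda>p. polyop p x)) = UNIV" by (simp add: Cyc_eq)
  have "\<exists>n\<ge>N. d ((T^^n) x) x < 1 / real (Suc k)" for N k
  proof -
    have "G N k \<in> \<G>" by (auto simp: \<G>_def)
    then have "x \<in> G N k" using x by blast
    then show ?thesis by (simp add: G_def)
  qed
  then obtain r where r: "strict_mono r" "\<And>k. d ((T^^r k) x) x < 1 / real (Suc k)"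
    using subseq_from[where P="\<lambda>n k. d ((T^^n) x) x < 1 / real (Suc k)"] by blast
  have rx: "(\<lambda>k. (T^^r k) x) \<longlonglongrightarrow> x"
    unfolding tendsto_metric
  proof (intro allI impI)
    fix e :: real assume e: "e > 0"
    obtain K where K: "1 / real (Suc K) < e" using e
      by (rule nat_approx_posE)
    show "\<exists>N. \<forall>n\<ge>N. d ((T^^r n) x) x < e"
    proof (intro exI allI impI)
      fix n assume "n \<ge> K"
      then have "1 / real (Suc n) \<le> 1 / real (Suc K)" by (intro divide_left_mono) auto
      then show "d ((T^^r n) x) x < e" using r(2)[of n] K by linarith
    qed
  qed
  define nn where "nn k = r (Suc k)" for k
  have nn1: "strict_mono nn" using r(1) by (simp add: strict_mono_def nn_def)
  have nn2: "\<forall>k. nn k \<ge> 1"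
  proof
    fix k show "nn k \<ge> 1" using seq_suble[OF r(1), of "Suc k"] by (simp add: nn_def)
  qed
  have rx': "(\<lambda>k. (T^^nn k) x) \<longlonglongrightarrow> x" unfolding nn_def by (rule LIMSEQ_Suc[OF rx])
  have nn3: "\<forall>y\<in>range (\<lambda>p. polyop p x). (\<lambda>k. (T^^nn k) y) \<longlonglongrightarrow> y"
  proof
    fix y assume "y \<in> range (\<lambda>p. polyop p x)"
    then obtain p where y: "y = polyop p x" by auto
    have "(\<lambda>k. polyop p ((T^^nn k) x)) \<longlonglongrightarrow> polyop p x" by (rule tendsto_polyop[OF rx'])
    then show "(\<lambda>k. (T^^nn k) y) \<longlonglongrightarrow> y" by (simp add: y polyop_Tn)
  qed
  have qr: "quasi_rigid T"
    unfolding quasi_rigid_def using nn1 nn2 nn3 xc by blast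
  show ?thesis using gd dense_Cyc qr by (simp add: Cyc_def)
qed

end


theorem mainTheorem7:
  fixes sR :: "real \<Rightarrow> 'a::{ab_group_add,topological_space} \<Rightarrow> 'a"
    and T :: "'a \<Rightarrow> 'a"
    and sC :: "complex \<Rightarrow> 'b::{ab_group_add,topological_space} \<Rightarrow> 'b"
    and S :: "'b \<Rightarrow> 'b"
  shows
   "(F_space sR \<and> separable_space (euclidean :: 'a topology) \<and> infinite_dimensional sR
      \<and> Vector_Spaces.linear sR sR T \<and> continuous_on UNIV T
      \<and> recurrent T \<and> cyclic sR T
     \<longrightarrow> gdelta_in euclidean {x. cyclic_vector sR T x}
       \<and> closure {x. cyclic_vector sR T x} = UNIV
       \<and> quasi_rigid T)
  \<and> (F_space sC \<and> separable_space (euclidean :: 'b topology) \<and> infinite_dimensional sC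
      \<and> Vector_Spaces.linear sC sC S \<and> continuous_on UNIV S
      \<and> recurrent S \<and> cyclic sC S
     \<longrightarrow> gdelta_in euclidean {x. cyclic_vector sC S x}
       \<and> closure {x. cyclic_vector sC S x} = UNIV
       \<and> quasi_rigid S)"
proof (rule conjI; rule impI)
  assume H: "F_space sR \<and> separable_space (euclidean :: 'a topology) \<and> infinite_dimensional sR
      \<and> Vector_Spaces.linear sR sR T \<and> continuous_on UNIV T
      \<and> recurrent T \<and> cyclic sR T"
  then have vs: "vector_space sR" and addc: "continuous_on UNIV (\<lambda>p::'a\<times>'a. fst p + snd p)"
    and smc: "continuous_on UNIV (\<lambda>p::real\<times>'a. sR (fst p) (snd p))"
    and cm: "completely_metrizable_space (euclidean :: 'a topology)"
    and sep: "separable_space (euclidean :: 'a topology)"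
    and lin: "Vector_Spaces.linear sR sR T" and Tc: "continuous_on UNIV T"
    and rec: "recurrent T" and cyc: "cyclic sR T"
    by (simp_all add: F_space_def)
  have op: "opctx sR T" unfolding opctx_def using vs addc smc lin Tc by blast
  interpret ro: ropctx sR T unfolding ropctx_def by (rule op)
  obtain M and d :: "'a \<Rightarrow> 'a \<Rightarrow> real" where Md: "Metric_space M d" "Metric_space.mcomplete M d"
    "(euclidean :: 'a topology) = Metric_space.mtopology M d"
    using cm unfolding completely_metrizable_space_def by blast
  have "M = UNIV"
    using Metric_space.topspace_mtopology[OF Md(1)] Md(3) by (metis topspace_euclidean)
  with Md have Md': "Metric_space UNIV d" "(euclidean :: 'a topology) = Metric_space.mtopology UNIV d"
    by simp_all
  interpret mc: mctx sR T d
    unfolding mctx_def mctx_axioms_def using op Md' by blast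
  have RD: "closure ro.RV = UNIV" by (rule mc.RD[OF rec])
  show "gdelta_in euclidean {x. cyclic_vector sR T x} \<and> closure {x. cyclic_vector sR T x} = UNIV \<and> quasi_rigid T"
    by (rule mc.main_mctx[OF cm sep rec cyc ro.good_real_perturb[OF RD]])
next
  assume H: "F_space sC \<and> separable_space (euclidean :: 'b topology) \<and> infinite_dimensional sC
      \<and> Vector_Spaces.linear sC sC S \<and> continuous_on UNIV S
      \<and> recurrent S \<and> cyclic sC S"
  then have vs: "vector_space sC" and addc: "continuous_on UNIV (\<lambda>p::'b\<times>'b. fst p + snd p)"
    and smc: "continuous_on UNIV (\<lambda>p::complex\<times>'b. sC (fst p) (snd p))"
    and cm: "completely_metrizable_space (euclidean :: 'b topology)"
    and sep: "separable_space (euclidean :: 'b topology)"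
    and lin: "Vector_Spaces.linear sC sC S" and Tc: "continuous_on UNIV S"
    and rec: "recurrent S" and cyc: "cyclic sC S"
    by (simp_all add: F_space_def)
  have op: "opctx sC S" unfolding opctx_def using vs addc smc lin Tc by blast
  interpret co: copctx sC S unfolding copctx_def by (rule op)
  obtain M and d :: "'b \<Rightarrow> 'b \<Rightarrow> real" where Md: "Metric_space M d" "Metric_space.mcomplete M d"
    "(euclidean :: 'b topology) = Metric_space.mtopology M d"
    using cm unfolding completely_metrizable_space_def by blast
  have "M = UNIV"
    using Metric_space.topspace_mtopology[OF Md(1)] Md(3) by (metis topspace_euclidean)
  with Md have Md': "Metric_space UNIV d" "(euclidean :: 'b topology) = Metric_space.mtopology UNIV d"
    by simp_all
  interpret mc: mctx sC S d
    unfolding mctx_def mctx_axioms_def using op Md' by blast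
  have RD: "closure co.RV = UNIV" by (rule mc.RD[OF rec])
  show "gdelta_in euclidean {x. cyclic_vector sC S x} \<and> closure {x. cyclic_vector sC S x} = UNIV \<and> quasi_rigid S"
    by (rule mc.main_mctx[OF cm sep rec cyc co.good_complex_perturb[OF RD]])
qed

end
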